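(* Let $G^\sigma$ be an oriented graph whose underlying graph $G$ is a simple connected graph with $n$ vertices and $m$ edges. Then $$sr(G^\sigma)-\alpha(G)\geqslant 4n-2m-3\sqrt{n(n-1)-2m+\tfrac{1}{4}}-\tfrac{7}{2},$$ with equality if and only if $G\cong S_n$ or $G\cong C_3$.
   Context: An oriented graph $G^\sigma$ is obtained from a simple graph $G$ by assigning a direction to each edge. Its skew-adjacency matrix $S(G^\sigma)=[s_{x,y}]$ has $s_{x,y}=1$ if there is an arc from $x$ to $y$, $s_{x,y}=-1$ if there is an arc from $y$ to $x$, and $0$ otherwise; the skew-rank $sr(G^\sigma)$ is the rank of $S(G^\sigma)$. $\alpha(G)$ is the independence number of $G$. $S_n$ denotes the star on $n$ vertices (the single vertex when $n=1$) and $C_3$ the triangle. *)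

theory Defs
  imports "HOL-Analysis.Analysis"
begin

text \<open>An oriented graph on the finite vertex type 'n (all of UNIV are vertices),
  given by its set of arcs A: no loops and no pair of opposite arcs.\<close>
definition oriented_graph :: "('n \<times> 'n) set \<Rightarrow> bool" where
  "oriented_graph A \<longleftrightarrow> (\<forall>x. (x, x) \<notin> A) \<and> (\<forall>x y. (x, y) \<in> A \<longrightarrow> (y, x) \<notin> A)"

definition und_adj :: "('n \<times> 'n) set \<Rightarrow> 'n \<Rightarrow> 'n \<Rightarrow> bool" where
  "und_adj A x y \<longleftrightarrow> (x, y) \<in> A \<or> (y, x) \<in> A"

definition num_edges :: "('n::finite \<times> 'n) set \<Rightarrow> nat" where
  "num_edges A = card {e. \<exists>x y. e = {x, y} \<and> und_adj A x y}"

definition skew_adj :: "('n::finite \<times> 'n) set \<Rightarrow> real^'n^'n" where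
  "skew_adj A = (\<chi> x y. if (x, y) \<in> A then 1 else if (y, x) \<in> A then -1 else 0)"

definition skew_rank :: "('n::finite \<times> 'n) set \<Rightarrow> nat" where
  "skew_rank A = rank (skew_adj A)"

definition connected_graph :: "('n \<Rightarrow> 'n \<Rightarrow> bool) \<Rightarrow> bool" where
  "connected_graph E \<longleftrightarrow> (\<forall>x y. E\<^sup>*\<^sup>* x y)"

definition independent_set :: "('n \<Rightarrow> 'n \<Rightarrow> bool) \<Rightarrow> 'n set \<Rightarrow> bool" where
  "independent_set E I \<longleftrightarrow> (\<forall>x\<in>I. \<forall>y\<in>I. \<not> E x y)"

definition independence_number :: "('n::finite \<Rightarrow> 'n \<Rightarrow> bool) \<Rightarrow> nat" where
  "independence_number E = Max (card ` {I. independent_set E I})"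

definition graph_iso :: "'a set \<Rightarrow> ('a \<Rightarrow> 'a \<Rightarrow> bool) \<Rightarrow> 'b set \<Rightarrow> ('b \<Rightarrow> 'b \<Rightarrow> bool) \<Rightarrow> bool" where
  "graph_iso V E W F \<longleftrightarrow> (\<exists>f. bij_betw f V W \<and> (\<forall>x\<in>V. \<forall>y\<in>V. E x y \<longleftrightarrow> F (f x) (f y)))"

text \<open>Star S_k on vertices {0..<k} with centre 0 (single vertex when k = 1).\<close>
definition star_adj :: "nat \<Rightarrow> nat \<Rightarrow> bool" where
  "star_adj i j \<longleftrightarrow> i \<noteq> j \<and> (i = 0 \<or> j = 0)"

text \<open>Triangle C_3 on vertices {0,1,2}.\<close>
definition tri_adj :: "nat \<Rightarrow> nat \<Rightarrow> bool" where
  "tri_adj i j \<longleftrightarrow> i \<noteq> j"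

end

theory Submission
  imports Defs
begin

definition rowind :: "real^'n^'n \<Rightarrow> 'n set \<Rightarrow> bool" where
  "rowind M W \<longleftrightarrow> (\<forall>c. (\<forall>x\<in>W. (\<Sum>w\<in>W. c w * M$w$x) = 0) \<longrightarrow> (\<forall>w\<in>W. c w = 0))"

lemma rowind_empty: "rowind M {}"
  by (simp add: rowind_def)

lemma rowind_D: "rowind M W \<Longrightarrow> (\<forall>x\<in>W. (\<Sum>w\<in>W. c w * M$w$x) = 0) \<Longrightarrow> w \<in> W \<Longrightarrow> c w = 0"
  unfolding rowind_def by blast

lemma rank_ge_rowind:
  fixes M :: "real^'n::finite^'n"
  assumes R: "rowind M W"
  shows "card W \<le> rank M"
proof -
  have fin: "finite W" by simp
  have inj: "inj_on (\<lambda>w. M$w) W"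
  proof (rule inj_onI, rule ccontr)
    fix a b assume a: "a \<in> W" and b: "b \<in> W" and eq: "M$a = M$b" and ne: "a \<noteq> b"
    define c where "c = (\<lambda>w. if w = a then (1::real) else if w = b then -1 else 0)"
    have "\<forall>x\<in>W. (\<Sum>w\<in>W. c w * M$w$x) = 0"
    proof
      fix x assume "x \<in> W"
      have "(\<Sum>w\<in>W. c w * M$w$x) = (\<Sum>w\<in>{a,b}. c w * M$w$x)"
        by (rule sum.mono_neutral_right) (use a b in \<open>auto simp: c_def\<close>)
      also have "\<dots> = M$a$x - M$b$x" using ne by (simp add: c_def)
      finally show "(\<Sum>w\<in>W. c w * M$w$x) = 0" using eq by simp
    qed
    with R a have "c a = 0" unfolding rowind_def by blast
    then show False by (simp add: c_def)
  qed
  have indep: "independent ((\<lambda>w. M$w) ` W)"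
  proof
    assume "dependent ((\<lambda>w. M$w) ` W)"
    then obtain u where u1: "\<exists>v\<in>(\<lambda>w. M$w) ` W. u v \<noteq> 0"
      and u2: "(\<Sum>v\<in>(\<lambda>w. M$w) ` W. u v *\<^sub>R v) = 0"
      using real_vector.dependent_finite[of "(\<lambda>w. M$w) ` W"] by auto
    have u3: "(\<Sum>w\<in>W. u (M$w) *\<^sub>R M$w) = 0"
      using u2 by (simp add: sum.reindex[OF inj])
    have "\<forall>x\<in>W. (\<Sum>w\<in>W. u (M$w) * M$w$x) = 0"
    proof
      fix x assume "x \<in> W"
      have "(\<Sum>w\<in>W. u (M$w) *\<^sub>R M$w) $ x = 0" using u3 by simp
      then show "(\<Sum>w\<in>W. u (M$w) * M$w$x) = 0" by (simp add: sum_component)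
    qed
    with R have "\<forall>w\<in>W. u (M$w) = 0" using rowind_D[of M W "\<lambda>w. u (M$w)"] by blast
    with u1 show False by auto
  qed
  have sub: "(\<lambda>w. M$w) ` W \<subseteq> rows M"
    by (auto simp: rows_def row_def vec_lambda_eta)
  have "card W = card ((\<lambda>w. M$w) ` W)" using card_image[OF inj] by simp
  also have "\<dots> \<le> dim (rows M)" by (rule independent_card_le_dim[OF sub indep])
  also have "\<dots> = rank M" by (simp add: row_rank_def)
  finally show ?thesis .
qed

lemma rowind_pair:
  fixes M :: "real^'n::finite^'n"
  assumes R: "rowind M W" and z: "z \<notin> W" and p: "p \<notin> W" and zp: "z \<noteq> p"
    and zz: "M$z$z = 0" and zW: "\<forall>x\<in>W. M$z$x = 0 \<and> M$x$z = 0"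
    and pz: "M$p$z \<noteq> 0" and zp2: "M$z$p \<noteq> 0"
  shows "rowind M (insert z (insert p W))"
  unfolding rowind_def
proof (intro allI impI)
  fix c assume H: "\<forall>x\<in>insert z (insert p W). (\<Sum>w\<in>insert z (insert p W). c w * M$w$x) = 0"
  have fin: "finite W" by simp
  have S: "(\<Sum>w\<in>insert z (insert p W). c w * M$w$x) = c z * M$z$x + c p * M$p$x + (\<Sum>w\<in>W. c w * M$w$x)" for x
    using z p zp fin by (simp add: sum.insert)
  have "c z * M$z$z + c p * M$p$z + (\<Sum>w\<in>W. c w * M$w$z) = 0" using H S[of z] by simp
  moreover have "(\<Sum>w\<in>W. c w * M$w$z) = 0" using zW by simp
  ultimately have cp: "c p = 0" using zz pz by simp
  have "\<forall>x\<in>W. (\<Sum>w\<in>W. c w * M$w$x) = 0"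
  proof
    fix x assume x: "x \<in> W"
    have "c z * M$z$x + c p * M$p$x + (\<Sum>w\<in>W. c w * M$w$x) = 0" using H S[of x] x by simp
    then show "(\<Sum>w\<in>W. c w * M$w$x) = 0" using zW x cp by simp
  qed
  with R have cW: "\<forall>w\<in>W. c w = 0" unfolding rowind_def by blast
  have "c z * M$z$p + c p * M$p$p + (\<Sum>w\<in>W. c w * M$w$p) = 0" using H S[of p] by simp
  then have cz: "c z = 0" using cW cp zp2 by simp
  show "\<forall>w\<in>insert z (insert p W). c w = 0" using cz cp cW by simp
qed

lemma greedy:
  fixes M :: "real^'n::finite^'n" and E :: "'n \<Rightarrow> 'n \<Rightarrow> bool" and key :: "'n \<Rightarrow> nat"
  assumes irr: "\<And>x. \<not> E x x" and sym: "\<And>x y. E x y \<Longrightarrow> E y x"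
    and Mz: "\<And>x y. \<not> E x y \<Longrightarrow> M$x$y = 0" and Mnz: "\<And>x y. E x y \<Longrightarrow> M$x$y \<noteq> 0"
    and inj: "inj key"
    and H: "\<forall>z\<in>S. \<forall>y\<in>S. E z y \<and> key y < key z \<longrightarrow> y = \<pi> z"
  shows "\<exists>I W. I \<subseteq> S \<and> W \<subseteq> S \<and> independent_set E I \<and> rowind M W \<and> 2 * card S \<le> card W + 2 * card I"
  using H
proof (induction "card S" arbitrary: S rule: less_induct)
  case less
  show ?case
  proof (cases "S = {}")
    case True
    then show ?thesis by (intro exI[of _ "{}"]) (simp add: rowind_empty independent_set_def)
  next
    case False
    have fin: "finite S" by simp
    define z where "z = (SOME z. z \<in> S \<and> key z = Max (key ` S))"
    have "Max (key ` S) \<in> key ` S" using False fin by simp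
    then have "\<exists>z. z \<in> S \<and> key z = Max (key ` S)" by auto
    then have zS: "z \<in> S" and zk: "key z = Max (key ` S)" unfolding z_def by (metis (mono_tags, lifting) someI_ex)+
    have zmax: "key y < key z" if "y \<in> S" "y \<noteq> z" for y
    proof -
      have "key y \<le> key z" using zk that fin by simp
      moreover have "key y \<noteq> key z" using inj that by (metis injD)
      ultimately show ?thesis by simp
    qed
    have nb: "y = \<pi> z" if "y \<in> S" "E z y" for y
      using less.prems zS that zmax irr by (metis)
    show ?thesis
    proof (cases "\<pi> z \<in> S \<and> E z (\<pi> z)")
      case True
      define p where "p = \<pi> z"
      have pS: "p \<in> S" and zp: "E z p" using True p_def by auto
      have zpne: "z \<noteq> p" using zp irr by auto
      define S' where "S' = S - {z, p}"
      have "card {z,p} \<le> card S" using zS pS by (intro card_mono) auto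
      then have cS: "card S = card S' + 2" using zS pS zpne fin unfolding S'_def
        by (simp add: card_Diff_subset)
      have "\<forall>z\<in>S'. \<forall>y\<in>S'. E z y \<and> key y < key z \<longrightarrow> y = \<pi> z" using less.prems unfolding S'_def by blast
      then obtain I W where IW: "I \<subseteq> S'" "W \<subseteq> S'" "independent_set E I" "rowind M W" "2 * card S' \<le> card W + 2 * card I"
        using less.hyps[of S'] cS by auto
      have zI: "z \<notin> I" "z \<notin> W" "p \<notin> W" using IW unfolding S'_def by auto
      have znb: "\<not> E z x" if "x \<in> S'" for x using nb[of x] that unfolding S'_def p_def by auto
      have ind: "independent_set E (insert z I)"
        using IW(3) IW(1) znb irr sym unfolding independent_set_def by blast
      have rw: "rowind M (insert z (insert p W))"
      proof (rule rowind_pair[OF IW(4) zI(2) zI(3) zpne])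
        show "M$z$z = 0" using Mz irr by blast
        show "\<forall>x\<in>W. M$z$x = 0 \<and> M$x$z = 0" using IW(2) znb Mz sym by blast
        show "M$p$z \<noteq> 0" using Mnz sym zp by blast
        show "M$z$p \<noteq> 0" using Mnz zp by blast
      qed
      have cw: "card (insert z (insert p W)) = card W + 2" using zI zpne by simp
      have ci: "card (insert z I) = card I + 1" using zI by simp
      have sub: "insert z I \<subseteq> S" "insert z (insert p W) \<subseteq> S" using IW(1,2) zS pS unfolding S'_def by auto
      have "2 * card S \<le> card (insert z (insert p W)) + 2 * card (insert z I)" using IW(5) cS ci cw by simp
      then show ?thesis using sub ind rw by blast
    next
      case False
      have znb: "\<not> E z x" if "x \<in> S" for x using nb[of x] that False by auto
      define S' where "S' = S - {z}"
      have "card S > 0" using zS fin card_gt_0_iff by blast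
      then have cS: "card S = card S' + 1" using zS fin unfolding S'_def
        by (simp add: card_Diff_subset)
      have "\<forall>z\<in>S'. \<forall>y\<in>S'. E z y \<and> key y < key z \<longrightarrow> y = \<pi> z" using less.prems unfolding S'_def by blast
      then obtain I W where IW: "I \<subseteq> S'" "W \<subseteq> S'" "independent_set E I" "rowind M W" "2 * card S' \<le> card W + 2 * card I"
        using less.hyps[of S'] cS by auto
      have zI: "z \<notin> I" using IW unfolding S'_def by auto
      have ind: "independent_set E (insert z I)"
        using IW(3) IW(1) znb irr sym unfolding independent_set_def S'_def by blast
      have ci: "card (insert z I) = card I + 1" using zI by simp
      have sub: "insert z I \<subseteq> S" "W \<subseteq> S" using IW(1,2) zS unfolding S'_def by auto
      have "2 * card S \<le> card W + 2 * card (insert z I)" using IW(5) cS ci by simp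
      then show ?thesis using sub ind IW(4) by blast
    qed
  qed
qed


lemma indep_le:
  fixes E :: "'n::finite \<Rightarrow> 'n \<Rightarrow> bool"
  assumes "independent_set E I" shows "card I \<le> independence_number E"
  unfolding independence_number_def
  by (rule Max_ge) (use assms in auto)

lemma indep_ex:
  fixes E :: "'n::finite \<Rightarrow> 'n \<Rightarrow> bool"
  shows "\<exists>I. independent_set E I \<and> card I = independence_number E"
proof -
  have "{} \<in> {I. independent_set E I}" by (simp add: independent_set_def)
  then have "independence_number E \<in> card ` {I. independent_set E I}"
    unfolding independence_number_def by (intro Max_in) auto
  then show ?thesis by auto
qed

lemma skew_entry: "skew_adj A $ x $ y = (if (x, y) \<in> A then 1 else if (y, x) \<in> A then -1 else 0)"
  by (simp add: skew_adj_def)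

lemma og_facts:
  assumes "oriented_graph A"
  shows "\<not> und_adj A x x" "und_adj A x y \<Longrightarrow> und_adj A y x"
    "\<not> und_adj A x y \<Longrightarrow> skew_adj A $ x $ y = 0"
    "und_adj A x y \<Longrightarrow> skew_adj A $ x $ y \<noteq> 0"
  using assms by (auto simp: oriented_graph_def und_adj_def skew_entry)

lemma dbl:
  fixes key :: "'a \<Rightarrow> nat"
  assumes "key a < key x" "key b < key y" "{x, a} = {y, b}"
  shows "x = y \<and> a = b"
  using assms by (auto simp: doubleton_eq_iff)

lemma lower_main:
  fixes A :: "('n::finite \<times> 'n) set"
  assumes og: "oriented_graph A" and con: "connected_graph (und_adj A)"
  shows "4 * CARD('n) \<le> skew_rank A + 2 * independence_number (und_adj A) + 2 * num_edges A + 2"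
proof -
  define E where "E = und_adj A"
  define n where "n = CARD('n)"
  obtain r :: 'n where True by blast
  define dist where "dist x = (LEAST k. (E ^^ k) r x)" for x
  have ex: "\<exists>k. (E ^^ k) r x" for x
    using con rtranclp_imp_relpowp unfolding connected_graph_def E_def by metis
  have dist_ok: "(E ^^ dist x) r x" for x unfolding dist_def using ex by (rule LeastI_ex)
  have par: "\<exists>y. E y x \<and> dist y < dist x" if "x \<noteq> r" for x
  proof (cases "dist x")
    case 0 then show ?thesis using dist_ok[of x] that by simp
  next
    case (Suc j)
    then obtain y where y1: "(E ^^ j) r y" and y2: "E y x" using dist_ok[of x]
      by (metis relpowp_Suc_E)
    have "dist y \<le> j" unfolding dist_def using y1 by (rule Least_le)
    then show ?thesis using y2 Suc by auto
  qed
  obtain h :: "'n \<Rightarrow> nat" where h: "bij_betw h UNIV {0..<n}"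
    using ex_bij_betw_finite_nat[of "UNIV :: 'n set"] unfolding n_def by auto
  have hlt: "h x < n" for x using h by (auto simp: bij_betw_def)
  have hinj: "inj h" using h by (auto simp: bij_betw_def)
  define key where "key x = dist x * n + h x" for x
  have key_inj: "inj key"
  proof (rule injI)
    fix x y assume "key x = key y"
    then have "dist x * n + h x = dist y * n + h y" by (simp add: key_def)
    then have "h x = h y" using hlt[of x] hlt[of y]
      by (metis add.commute mod_mult_self3 mod_less)
    then show "x = y" using hinj by (simp add: inj_def)
  qed
  have key_lt: "key y < key x" if "dist y < dist x" for x y
  proof -
    have "key y < dist y * n + n" using hlt[of y] by (simp add: key_def)
    also have "\<dots> = (dist y + 1) * n" by simp
    also have "\<dots> \<le> dist x * n" using that by (intro mult_right_mono) auto
    also have "\<dots> \<le> key x" by (simp add: key_def)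
    finally show ?thesis .
  qed
  define \<pi> where "\<pi> x = (SOME y. E y x \<and> dist y < dist x)" for x
  have \<pi>_ok: "E (\<pi> x) x \<and> key (\<pi> x) < key x" if "x \<noteq> r" for x
  proof -
    have "E (\<pi> x) x \<and> dist (\<pi> x) < dist x"
      unfolding \<pi>_def using par[OF that] by (rule someI_ex)
    then show ?thesis using key_lt by blast
  qed
  define D where "D = {x. \<exists>y. E x y \<and> key y < key x \<and> y \<noteq> \<pi> x}"
  define \<sigma> where "\<sigma> x = (SOME y. E x y \<and> key y < key x \<and> y \<noteq> \<pi> x)" for x
  have \<sigma>_ok: "E x (\<sigma> x) \<and> key (\<sigma> x) < key x \<and> \<sigma> x \<noteq> \<pi> x" if "x \<in> D" for x
    unfolding \<sigma>_def using that unfolding D_def by (metis (mono_tags, lifting) mem_Collect_eq someI_ex)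
  define ES where "ES = {e. \<exists>x y. e = {x, y} \<and> E x y}"
  have m_eq: "num_edges A = card ES" unfolding num_edges_def ES_def E_def ..
  have symE: "E x y \<Longrightarrow> E y x" for x y using og_facts(2)[OF og] unfolding E_def .
  define f1 where "f1 x = {x, \<pi> x}" for x
  define f2 where "f2 x = {x, \<sigma> x}" for x
  have i1: "inj_on f1 (-{r})"
  proof (rule inj_onI)
    fix x y assume "x \<in> -{r}" "y \<in> -{r}" "f1 x = f1 y"
    then show "x = y" using \<pi>_ok[of x] \<pi>_ok[of y] dbl[of key "\<pi> x" x "\<pi> y" y] by (auto simp: f1_def)
  qed
  have i2: "inj_on f2 D"
  proof (rule inj_onI)
    fix x y assume "x \<in> D" "y \<in> D" "f2 x = f2 y"
    then show "x = y" using \<sigma>_ok[of x] \<sigma>_ok[of y] dbl[of key "\<sigma> x" x "\<sigma> y" y] by (auto simp: f2_def)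
  qed
  have disj: "f1 ` (-{r}) \<inter> f2 ` D = {}"
  proof (rule ccontr)
    assume "f1 ` (-{r}) \<inter> f2 ` D \<noteq> {}"
    then obtain x y where x: "x \<noteq> r" and y: "y \<in> D" and eq: "{x, \<pi> x} = {y, \<sigma> y}"
      by (auto simp: f1_def f2_def)
    then have "x = y \<and> \<pi> x = \<sigma> y" using dbl[of key] \<pi>_ok[OF x] \<sigma>_ok[OF y] by blast
    then show False using \<sigma>_ok[OF y] by metis
  qed
  have sub: "f1 ` (-{r}) \<union> f2 ` D \<subseteq> ES"
    using \<pi>_ok \<sigma>_ok symE unfolding f1_def f2_def ES_def by blast
  have "card (f1 ` (-{r}) \<union> f2 ` D) = card (-{r} :: 'n set) + card D"
    using disj i1 i2 by (simp add: card_Un_disjoint card_image)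
  also have "card (-{r} :: 'n set) = n - 1"
    by (simp add: n_def Compl_eq_Diff_UNIV card_Diff_subset)
  finally have cnt: "n - 1 + card D \<le> num_edges A"
    using card_mono[OF _ sub] m_eq by simp
  have H: "\<forall>z\<in>-D. \<forall>y\<in>-D. E z y \<and> key y < key z \<longrightarrow> y = \<pi> z"
    unfolding D_def by blast
  obtain I W where IW: "I \<subseteq> -D" "W \<subseteq> -D" "independent_set E I" "rowind (skew_adj A) W"
      "2 * card (-D) \<le> card W + 2 * card I"
    using greedy[of E "skew_adj A" key "-D" \<pi>, OF _ _ _ _ key_inj H] og_facts[OF og] unfolding E_def
    by blast
  have "card W \<le> skew_rank A" using rank_ge_rowind[OF IW(4)] by (simp add: skew_rank_def)
  moreover have "card I \<le> independence_number (und_adj A)" using indep_le IW(3) unfolding E_def by blast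
  moreover have "card (-D) = n - card D" by (simp add: n_def Compl_eq_Diff_UNIV card_Diff_subset)
  moreover have "card D \<le> n" by (simp add: n_def card_mono)
  moreover have "n \<ge> 1" by (simp add: n_def)
  ultimately show ?thesis using IW(5) cnt unfolding n_def by linarith
qed


lemma nonedge:
  fixes A :: "('n::finite \<times> 'n) set"
  assumes og: "oriented_graph A" and ind: "independent_set (und_adj A) I"
  shows "num_edges A + (card I choose 2) \<le> CARD('n) choose 2"
    and "num_edges A + (card I choose 2) = CARD('n) choose 2 \<Longrightarrow> x \<noteq> y \<Longrightarrow> und_adj A x y \<or> (x \<in> I \<and> y \<in> I)"
proof -
  define ES where "ES = {e. \<exists>x y. e = {x, y} \<and> und_adj A x y}"
  define P where "P = {B. B \<subseteq> (UNIV::'n set) \<and> card B = 2}"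
  define Q where "Q = {B. B \<subseteq> I \<and> card B = 2}"
  have cP: "card P = CARD('n) choose 2" unfolding P_def by (rule n_subsets) simp
  have cQ: "card Q = card I choose 2" unfolding Q_def by (rule n_subsets) simp
  have m: "num_edges A = card ES" unfolding num_edges_def ES_def ..
  have sES: "ES \<subseteq> P" using og_facts(1)[OF og] unfolding ES_def P_def by (auto simp: card_2_iff) metis
  have sQ: "Q \<subseteq> P" unfolding Q_def P_def by auto
  have dj: "ES \<inter> Q = {}" using ind unfolding ES_def Q_def independent_set_def by auto
  have cU: "card (ES \<union> Q) = num_edges A + (card I choose 2)"
    using dj m cQ by (simp add: card_Un_disjoint)
  have le: "card (ES \<union> Q) \<le> card P" using sES sQ by (intro card_mono) auto
  then show "num_edges A + (card I choose 2) \<le> CARD('n) choose 2" using cU cP by simp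
  assume eq: "num_edges A + (card I choose 2) = CARD('n) choose 2" and xy: "x \<noteq> y"
  have "ES \<union> Q = P" using sES sQ cU cP eq by (intro card_subset_eq) auto
  moreover have "{x, y} \<in> P" using xy unfolding P_def by auto
  ultimately have "{x, y} \<in> ES \<or> {x, y} \<in> Q" by auto
  then show "und_adj A x y \<or> (x \<in> I \<and> y \<in> I)"
    unfolding ES_def Q_def using og_facts(2)[OF og] by (auto simp: doubleton_eq_iff)
qed


lemma rank_star:
  fixes A :: "('n::finite \<times> 'n) set"
  assumes og: "oriented_graph A" and st: "\<And>x y. und_adj A x y \<longleftrightarrow> x \<noteq> y \<and> (x = u \<or> y = u)"
  shows "skew_rank A \<le> 2"
proof -
  define M where "M = skew_adj A"
  have "rows M \<subseteq> span {axis u 1, M$u}"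
  proof
    fix v assume "v \<in> rows M"
    then obtain x where v: "v = M$x" by (auto simp: rows_def row_def vec_lambda_eta)
    show "v \<in> span {axis u 1, M$u}"
    proof (cases "x = u")
      case True then show ?thesis using v by (simp add: span_base)
    next
      case False
      have eqx: "M$x = (M$x$u) *\<^sub>R axis u 1"
      proof (subst vec_eq_iff, rule allI)
        fix y show "M$x$y = ((M$x$u) *\<^sub>R axis u (1::real)) $ y"
        proof (cases "y = u")
          case True then show ?thesis by (simp add: axis_def)
        next
          case False
          then have "\<not> und_adj A x y" using st \<open>x \<noteq> u\<close> by blast
          then show ?thesis using og_facts(3)[OF og] False by (simp add: M_def axis_def)
        qed
      qed
      show ?thesis unfolding v by (subst eqx) (rule span_scale[OF span_base], simp)
    qed
  qed
  then have "dim (rows M) \<le> card {axis u (1::real), M$u}" by (rule dim_le_card) simp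
  also have "\<dots> \<le> 2" by (simp add: card_insert_if)
  finally show ?thesis by (simp add: skew_rank_def row_rank_def M_def)
qed

lemma rank_three:
  fixes A :: "('n::finite \<times> 'n) set"
  assumes og: "oriented_graph A" and c3: "CARD('n) = 3"
  shows "skew_rank A \<le> 2"
proof -
  define M where "M = skew_adj A"
  have sk: "M$j$i = - M$i$j" for i j
    using og unfolding M_def oriented_graph_def by (auto simp: skew_entry)
  have tr: "transpose M = (\<chi> i. (-1::real) *s M$i)"
    unfolding vec_eq_iff transpose_def by (auto intro: sk)
  have "det M = det (transpose M)" by simp
  also have "\<dots> = prod (\<lambda>i. -1::real) (UNIV::'n set) * det ((\<chi> i. M$i)::real^'n^'n)"
    unfolding tr by (rule det_rows_mul)
  also have "\<dots> = - det M" using c3 by (simp add: vec_lambda_eta)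
  finally have "det M = 0" by simp
  then have "rank M < CARD('n)" using det_eq_0_rank by blast
  then show ?thesis using c3 by (simp add: skew_rank_def M_def)
qed

lemma rank_one:
  fixes A :: "('n::finite \<times> 'n) set"
  assumes og: "oriented_graph A" and c1: "CARD('n) = 1"
  shows "skew_rank A = 0"
proof -
  have eq: "x = y" for x y :: 'n using c1 by (metis card_1_singletonE singletonD UNIV_I)
  have nA: "(x, y) \<notin> A" for x y using og eq[of x y] by (auto simp: oriented_graph_def)
  have "skew_adj A = 0"
    by (simp add: vec_eq_iff skew_entry nA)
  then show ?thesis by (simp add: skew_rank_def)
qed


lemma two_choose: "2 * (k choose 2) = k * (k - 1)"
proof (induction k)
  case 0 then show ?case by simp
next
  case (Suc k)
  have "Suc k choose 2 = k + (k choose 2)"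
    using choose_reduce_nat[of "Suc k" 2] by (simp add: numeral_2_eq_2)
  then show ?case using Suc by (cases k) (auto simp: algebra_simps)
qed

lemma bij_from_inj:
  fixes f :: "'n::finite \<Rightarrow> nat"
  assumes "inj f" "\<And>x. f x < CARD('n)"
  shows "bij_betw f UNIV {0..<CARD('n)}"
proof -
  have "f ` UNIV \<subseteq> {0..<CARD('n)}" using assms(2) by auto
  moreover have "card (f ` UNIV) = card {0..<CARD('n)}" using card_image[OF assms(1)] by simp
  ultimately have "f ` UNIV = {0..<CARD('n)}" by (intro card_subset_eq) auto
  then show ?thesis using assms(1) by (simp add: bij_betw_def)
qed

lemma alpha_ge1:
  fixes A :: "('n::finite \<times> 'n) set"
  assumes og: "oriented_graph A"
  shows "1 \<le> independence_number (und_adj A)"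
proof -
  obtain x :: 'n where True by blast
  have "independent_set (und_adj A) {x}" using og_facts(1)[OF og] by (simp add: independent_set_def)
  then show ?thesis using indep_le by fastforce
qed

lemma sqrt_quarter: "sqrt (1/4) = 1/2"
  by (rule real_sqrt_unique) (auto simp: power2_eq_square)


lemma sqrt_bound:
  fixes A :: "('n::finite \<times> 'n) set"
  assumes og: "oriented_graph A"
  shows "real (independence_number (und_adj A)) - 1/2
     \<le> sqrt (real CARD('n) * (real CARD('n) - 1) - 2 * real (num_edges A) + 1/4)"
    and "real (num_edges A) * 2 + real (independence_number (und_adj A)) * (real (independence_number (und_adj A)) - 1)
     \<le> real CARD('n) * (real CARD('n) - 1)"
proof -
  define a where "a = independence_number (und_adj A)"
  define n where "n = CARD('n)"
  define m where "m = num_edges A"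
  obtain I where I: "independent_set (und_adj A) I" "card I = a" using indep_ex unfolding a_def by blast
  have N: "m + (a choose 2) \<le> n choose 2" using nonedge(1)[OF og I(1)] I(2) unfolding m_def n_def by simp
  then have "2 * m + 2 * (a choose 2) \<le> 2 * (n choose 2)" by simp
  then have "2 * m + a * (a - 1) \<le> n * (n - 1)" by (simp add: two_choose)
  then have X: "real (2 * m) + real (a * (a - 1)) \<le> real (n * (n - 1))"
    by (simp only: of_nat_add[symmetric] of_nat_le_iff)
  have "a \<ge> 1" using alpha_ge1[OF og] unfolding a_def .
  then have e1: "real (a * (a - 1)) = real a * (real a - 1)" by (simp add: of_nat_diff)
  have "n \<ge> 1" unfolding n_def by simp
  then have e2: "real (n * (n - 1)) = real n * (real n - 1)" by (simp add: of_nat_diff)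
  have R: "real m * 2 + real a * (real a - 1) \<le> real n * (real n - 1)"
    using X unfolding e1 e2 by simp
  then show "real m * 2 + real a * (real a - 1) \<le> real n * (real n - 1)"
    unfolding a_def m_def n_def .
  have "(real a - 1/2)^2 \<le> real n * (real n - 1) - 2 * real m + 1/4"
    using R by (simp add: power2_eq_square algebra_simps)
  then have "real a - 1/2 \<le> sqrt (real n * (real n - 1) - 2 * real m + 1/4)"
    by (rule real_le_rsqrt)
  then show "real a - 1/2 \<le> sqrt (real CARD('n) * (real CARD('n) - 1) - 2 * real (num_edges A) + 1/4)"
    unfolding a_def m_def n_def .
qed

lemma main_ineq:
  fixes A :: "('n::finite \<times> 'n) set"
  assumes og: "oriented_graph A" and con: "connected_graph (und_adj A)"
  shows "4 * real CARD('n) - 2 * real (num_edges A)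
      - 3 * sqrt (real CARD('n) * (real CARD('n) - 1) - 2 * real (num_edges A) + 1/4) - 7/2
     \<le> real (skew_rank A) - real (independence_number (und_adj A))"
proof -
  have L: "4 * CARD('n) \<le> skew_rank A + 2 * independence_number (und_adj A) + 2 * num_edges A + 2"
    using lower_main[OF og con] .
  then have L': "4 * real CARD('n) \<le> real (skew_rank A) + 2 * real (independence_number (und_adj A)) + 2 * real (num_edges A) + 2"
    by linarith
  show ?thesis using L' sqrt_bound(1)[OF og] by linarith
qed


lemma iso_imp_le:
  fixes A :: "('n::finite \<times> 'n) set"
  assumes og: "oriented_graph A"
    and iso: "graph_iso UNIV (und_adj A) {0..<CARD('n)} star_adj \<or> graph_iso UNIV (und_adj A) {0..<3} tri_adj"
  shows "real (skew_rank A) - real (independence_number (und_adj A))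
     \<le> 4 * real CARD('n) - 2 * real (num_edges A)
      - 3 * sqrt (real CARD('n) * (real CARD('n) - 1) - 2 * real (num_edges A) + 1/4) - 7/2"
proof -
  define E where "E = und_adj A"
  define n where "n = CARD('n)"
  define m where "m = num_edges A"
  define s where "s = skew_rank A"
  define a where "a = independence_number E"
  have a1: "a \<ge> 1" using alpha_ge1[OF og] unfolding a_def E_def .
  have ES: "m = card {e. \<exists>x y. e = {x, y} \<and> E x y}" unfolding m_def num_edges_def E_def ..
  show ?thesis
  proof (cases "graph_iso UNIV (und_adj A) {0..<CARD('n)} star_adj")
    case True
    then obtain f where f: "bij_betw f UNIV {0..<n}" and fE: "\<And>x y. E x y \<longleftrightarrow> star_adj (f x) (f y)"
      unfolding graph_iso_def E_def n_def by blast
    have finj: "inj f" using f by (simp add: bij_betw_def)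
    show ?thesis
    proof (cases "n = 1")
      case True
      have s0: "s = 0" using rank_one[OF og] True unfolding s_def n_def by simp
      have eq: "x = y" for x y :: 'n using True unfolding n_def by (metis card_1_singletonE singletonD UNIV_I)
      have "\<not> E x y" for x y using og_facts(1)[OF og] eq[of x y] unfolding E_def by blast
      then have m0: "m = 0" unfolding ES by simp
      show ?thesis using s0 m0 a1 True sqrt_quarter
        unfolding s_def[symmetric] m_def[symmetric] n_def[symmetric] a_def[symmetric] E_def[symmetric]
        by simp
    next
      case False
      moreover have "n \<ge> 1" by (simp add: n_def)
      ultimately have n2: "n \<ge> 2" by linarith
      have "0 \<in> {0..<n}" using n2 by simp
      then obtain u where fu: "f u = 0" using f by (metis bij_betw_imp_surj_on imageE)
      have f0: "f x = 0 \<longleftrightarrow> x = u" for x using fu finj by (metis injD)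
      have st: "E x y \<longleftrightarrow> x \<noteq> y \<and> (x = u \<or> y = u)" for x y
        using fE[of x y] f0[of x] f0[of y] finj by (auto simp: star_adj_def inj_def)
      have s2: "s \<le> 2" using rank_star[OF og, of u] st unfolding s_def E_def by blast
      have "independent_set E (-{u})" using st by (auto simp: independent_set_def)
      then have "card (-{u} :: 'n set) \<le> a" unfolding a_def by (rule indep_le)
      moreover have "card (-{u} :: 'n set) = n - 1"
        by (simp add: n_def Compl_eq_Diff_UNIV card_Diff_subset)
      ultimately have an: "n - 1 \<le> a" by simp
      have "{e. \<exists>x y. e = {x, y} \<and> E x y} = (\<lambda>x. {u, x}) ` (-{u})"
        using st by (auto simp: insert_commute)
      moreover have "inj_on (\<lambda>x. {u, x}) (-{u})"
        by (rule inj_onI) (auto simp: doubleton_eq_iff)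
      ultimately have "m = n - 1" unfolding ES
        by (simp add: card_image n_def Compl_eq_Diff_UNIV card_Diff_subset)
      then have mr: "real m = real n - 1" using n2 by simp
      have anr: "real n - 1 \<le> real a" using an n2 by linarith
      have "real n * (real n - 1) - 2 * real m + 1/4 = (real n - 3/2)^2"
        using mr by (simp add: power2_eq_square algebra_simps)
      then have sq: "sqrt (real n * (real n - 1) - 2 * real m + 1/4) = real n - 3/2"
        using n2 by simp
      show ?thesis using sq mr anr s2
        unfolding s_def[symmetric] m_def[symmetric] n_def[symmetric] a_def[symmetric] E_def[symmetric]
        by simp
    qed
  next
    case False
    then obtain f where f: "bij_betw f UNIV {0..<3::nat}" and fE: "\<And>x y. E x y \<longleftrightarrow> tri_adj (f x) (f y)"
      using iso unfolding graph_iso_def E_def by blast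
    have n3: "n = 3" using bij_betw_same_card[OF f] unfolding n_def by simp
    have finj: "inj f" using f by (simp add: bij_betw_def)
    have st: "E x y \<longleftrightarrow> x \<noteq> y" for x y using fE[of x y] finj by (auto simp: tri_adj_def inj_def)
    have s2: "s \<le> 2" using rank_three[OF og] n3 unfolding s_def n_def by blast
    have "{e. \<exists>x y. e = {x, y} \<and> E x y} = {B. B \<subseteq> (UNIV::'n set) \<and> card B = 2}"
      using st by (auto simp: card_2_iff)
    moreover have "card {B. B \<subseteq> (UNIV::'n set) \<and> card B = 2} = CARD('n) choose 2"
      by (rule n_subsets) simp
    ultimately have "m = n choose 2" unfolding ES n_def by simp
    then have m3: "m = 3" using n3 by (simp add: numeral_3_eq_3 numeral_2_eq_2)
    show ?thesis using s2 m3 n3 a1 sqrt_quarter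
      unfolding s_def[symmetric] m_def[symmetric] n_def[symmetric] a_def[symmetric] E_def[symmetric]
      by simp
  qed
qed


lemma eq_imp_iso:
  fixes A :: "('n::finite \<times> 'n) set"
  assumes og: "oriented_graph A" and con: "connected_graph (und_adj A)"
    and eqn: "real (skew_rank A) - real (independence_number (und_adj A))
     = 4 * real CARD('n) - 2 * real (num_edges A)
      - 3 * sqrt (real CARD('n) * (real CARD('n) - 1) - 2 * real (num_edges A) + 1/4) - 7/2"
  shows "graph_iso UNIV (und_adj A) {0..<CARD('n)} star_adj \<or> graph_iso UNIV (und_adj A) {0..<3} tri_adj"
proof -
  define E where "E = und_adj A"
  define n where "n = CARD('n)"
  define m where "m = num_edges A"
  define s where "s = skew_rank A"
  define a where "a = independence_number E"
  define sq where "sq = sqrt (real n * (real n - 1) - 2 * real m + 1/4)"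
  have a1: "a \<ge> 1" using alpha_ge1[OF og] unfolding a_def E_def .
  have n1: "n \<ge> 1" by (simp add: n_def)
  have irr: "\<not> E x x" for x using og_facts(1)[OF og] unfolding E_def .
  have symE: "E x y \<Longrightarrow> E y x" for x y using og_facts(2)[OF og] unfolding E_def .
  have L: "4 * real n \<le> real s + 2 * real a + 2 * real m + 2"
    using lower_main[OF og con] unfolding s_def a_def m_def n_def E_def by linarith
  have S1: "real a - 1/2 \<le> sq" using sqrt_bound(1)[OF og] unfolding sq_def a_def m_def n_def E_def .
  have S2: "real m * 2 + real a * (real a - 1) \<le> real n * (real n - 1)"
    using sqrt_bound(2)[OF og] unfolding a_def m_def n_def E_def .
  have eq': "real s - real a = 4 * real n - 2 * real m - 3 * sq - 7/2"
    using eqn unfolding sq_def s_def a_def m_def n_def E_def .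
  have sqe: "sq = real a - 1/2" using L S1 eq' by linarith
  have Le: "real s + 2 * real a + 2 * real m = 4 * real n - 2" using L S1 eq' by linarith
  have "real a * (real a - 1) \<ge> 0" using a1 by (intro mult_nonneg_nonneg) auto
  then have t0: "real n * (real n - 1) - 2 * real m + 1/4 \<ge> 0" using S2 by linarith
  have "sq^2 = real n * (real n - 1) - 2 * real m + 1/4" unfolding sq_def using t0 by simp
  then have T: "real m * 2 + real a * (real a - 1) = real n * (real n - 1)"
    using sqe by (simp add: power2_eq_square algebra_simps)
  obtain I where I: "independent_set E I" "card I = a" using indep_ex unfolding a_def by blast
  have "real (2 * m + 2 * (a choose 2)) = real (2 * (n choose 2))"
  proof -
    have "real (2 * (a choose 2)) = real a * (real a - 1)" using a1 by (simp only: two_choose) (simp add: of_nat_diff)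
    moreover have "real (2 * (n choose 2)) = real n * (real n - 1)" using n1 by (simp only: two_choose) (simp add: of_nat_diff)
    ultimately show ?thesis using T by simp
  qed
  then have "2 * m + 2 * (a choose 2) = 2 * (n choose 2)" by (simp only: of_nat_eq_iff)
  then have "m + (card I choose 2) = CARD('n) choose 2" using I(2) unfolding n_def by simp
  then have cov: "x \<noteq> y \<Longrightarrow> E x y \<or> (x \<in> I \<and> y \<in> I)" for x y
    using nonedge(2)[OF og I(1)[unfolded E_def]] unfolding m_def E_def by blast
  show ?thesis
  proof (cases "I = UNIV")
    case True
    have noE: "\<not> E x y" for x y using I(1) True unfolding independent_set_def by blast
    have "x = y" for x y :: 'n
    proof -
      have "E\<^sup>*\<^sup>* x y" using con unfolding connected_graph_def E_def by blast
      then show ?thesis by (induction rule: rtranclp_induct) (auto simp: noE)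
    qed
    note eqv = this
    obtain g :: "'n \<Rightarrow> nat" where g: "bij_betw g UNIV {0..<n}"
      using ex_bij_betw_finite_nat[of "UNIV :: 'n set"] unfolding n_def by auto
    have "graph_iso UNIV (und_adj A) {0..<CARD('n)} star_adj"
      unfolding graph_iso_def E_def[symmetric] n_def[symmetric]
    proof (intro exI[of _ g] conjI ballI)
      fix x y :: 'n
      have "g x = g y" using eqv[of x y] by simp
      then show "E x y = star_adj (g x) (g y)" using noE by (simp add: star_adj_def)
    qed (rule g)
    then show ?thesis ..
  next
    case False
    then obtain u where uI: "u \<notin> I" by blast
    obtain i where iI: "i \<in> I" using I(2) a1 by (metis card.empty ex_in_conv not_one_le_zero)
    have ui: "u \<noteq> i" using uI iI by blast
    have Eui: "E u i" using cov[OF ui] uI by blast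
    have "rowind (skew_adj A) {u, i}"
      using rowind_pair[OF rowind_empty, of u i "skew_adj A"] ui og_facts[OF og] Eui symE irr
      unfolding E_def by auto
    then have s2: "s \<ge> 2" using rank_ge_rowind[of "skew_adj A" "{u, i}"] ui unfolding s_def skew_rank_def by simp
    define k where "k = n - a"
    have "card I \<le> CARD('n)" by (rule card_mono) auto
    then have an: "a \<le> n" using I(2) unfolding n_def by simp
    have nk: "n = a + k" using an unfolding k_def by simp
    have cI: "card (-I) = k" using I(2) unfolding k_def n_def by (simp add: Compl_eq_Diff_UNIV card_Diff_subset)
    have "u \<in> -I" using uI by simp
    then have "card (-I) > 0" using card_gt_0_iff by fastforce
    then have k1: "k \<ge> 1" using cI by simp
    have key: "(real k - 1) * (real k - 4 + 2 * real a) = 2 - real s"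
      using Le T nk by (simp add: algebra_simps)
    have kc: "k = 1 \<or> (k = 2 \<and> a = 1)"
    proof (rule ccontr)
      assume nc: "\<not> (k = 1 \<or> (k = 2 \<and> a = 1))"
      have "(real k - 1) * (real k - 4 + 2 * real a) > 0"
      proof (cases "k = 2")
        case True then have "a \<ge> 2" using nc a1 by simp
        then show ?thesis using True by simp
      next
        case False then have "k \<ge> 3" using nc k1 by simp
        then show ?thesis using a1 by (intro mult_pos_pos) auto
      qed
      then show False using key s2 by simp
    qed
    then show ?thesis
    proof
      assume k1': "k = 1"
      have cU: "-I = {u}" using cI k1' uI by (metis card_1_singletonE singletonD ComplI)
      have st: "E x y \<longleftrightarrow> x \<noteq> y \<and> (x = u \<or> y = u)" for x y
      proof
        assume "E x y"
        then show "x \<noteq> y \<and> (x = u \<or> y = u)" using irr I(1) cU unfolding independent_set_def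
          by (metis ComplI singletonD)
      next
        assume "x \<noteq> y \<and> (x = u \<or> y = u)"
        then show "E x y" using cov uI symE by blast
      qed
      obtain g :: "'n \<Rightarrow> nat" where g: "bij_betw g UNIV {0..<n}"
        using ex_bij_betw_finite_nat[of "UNIV :: 'n set"] unfolding n_def by auto
      have ginj: "inj g" and glt: "\<And>x. g x < n" using g by (auto simp: bij_betw_def)
      define f where "f x = (if x = u then 0 else if g x = 0 then g u else g x)" for x
      have gi: "g x = g y \<longleftrightarrow> x = y" for x y using ginj by (auto simp: inj_def)
      have finj: "inj f"
        by (rule injI) (auto simp: f_def gi split: if_splits; metis gi)
      have flt: "f x < n" for x using glt n1 by (simp add: f_def)
      have fb: "bij_betw f UNIV {0..<n}" using bij_from_inj[OF finj] flt unfolding n_def by blast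
      have f0: "f x = 0 \<longleftrightarrow> x = u" for x using finj by (auto simp: f_def gi; metis gi neq0_conv)
      have "graph_iso UNIV (und_adj A) {0..<CARD('n)} star_adj"
        unfolding graph_iso_def E_def[symmetric] n_def[symmetric]
      proof (intro exI[of _ f] conjI ballI)
        fix x y
        show "E x y = star_adj (f x) (f y)" using st[of x y] f0[of x] f0[of y] finj
          by (auto simp: star_adj_def inj_def)
      qed (rule fb)
      then show ?thesis ..
    next
      assume k2: "k = 2 \<and> a = 1"
      then have n3: "n = 3" using nk by simp
      have st: "E x y \<longleftrightarrow> x \<noteq> y" for x y
      proof
        assume "x \<noteq> y"
        moreover have "\<not> (x \<in> I \<and> y \<in> I)" using I(2) k2 \<open>x \<noteq> y\<close> by (metis card_1_singletonE singletonD)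
        ultimately show "E x y" using cov by blast
      qed (use irr in blast)
      obtain g :: "'n \<Rightarrow> nat" where g: "bij_betw g UNIV {0..<n}"
        using ex_bij_betw_finite_nat[of "UNIV :: 'n set"] unfolding n_def by auto
      have "graph_iso UNIV (und_adj A) {0..<3} tri_adj"
        unfolding graph_iso_def E_def[symmetric] using g n3 st
        by (auto simp: tri_adj_def bij_betw_def inj_def intro!: exI[of _ g])
      then show ?thesis ..
    qed
  qed
qed


theorem theorem1p5:
  fixes A :: "('n::finite \<times> 'n) set"
  assumes "oriented_graph A"
    and "connected_graph (und_adj A)"
  defines "n \<equiv> CARD('n)" and "m \<equiv> num_edges A"
  shows "real (skew_rank A) - real (independence_number (und_adj A))
           \<ge> 4 * real n - 2 * real m - 3 * sqrt (real n * (real n - 1) - 2 * real m + 1/4) - 7/2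
         \<and> (real (skew_rank A) - real (independence_number (und_adj A))
           = 4 * real n - 2 * real m - 3 * sqrt (real n * (real n - 1) - 2 * real m + 1/4) - 7/2
         \<longleftrightarrow> graph_iso UNIV (und_adj A) {0..<n} star_adj
             \<or> graph_iso UNIV (und_adj A) {0..<3} tri_adj)"
  unfolding n_def m_def
  using main_ineq[OF assms(1,2)] eq_imp_iso[OF assms(1,2)] iso_imp_le[OF assms(1)]
  by (meson antisym)

end
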